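(* Let $k$ be a field, $r\ge2$, and let $B$ be an $F_r$-Lie algebra satisfying $\Phi1$: $\forall x_1,\dots,x_4\ (x_1x_2)(x_3x_4)=0$, $\Phi2$: $\forall x,y\ (xyx=0\wedge xyy=0\to xy=0)$ and $\Phi3$: $\forall x,y,z\ (x\ne0\wedge xy=0\wedge xz=0\to yz=0)$. Let $c_1,\dots,c_n$, $n\le r$, be elements of the designated copy of $F_r$ which are linearly independent modulo $\mathrm{Fit}(F_r)$. Then $c_1,\dots,c_n$ are linearly independent modulo $\mathrm{Fit}(B)$.
   Context: $F_r$ is the free metabelian Lie algebra over $k$ of rank $r$ with free base $a_1,\dots,a_r$; an $F_r$-Lie algebra is a Lie algebra containing a designated copy of $F_r$. Products are left-normed. $\mathrm{Fit}(\cdot)$ denotes the Fitting radical (sum of all nilpotent ideals). *)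

theory Defs
  imports Complex_Main "HOL-Library.Function_Algebras"
begin

text \<open>Products are left-normed: xyz = br (br x y) z.\<close>

definition lie_algebra :: "('k::field \<Rightarrow> 'b::ab_group_add \<Rightarrow> 'b) \<Rightarrow> ('b \<Rightarrow> 'b \<Rightarrow> 'b) \<Rightarrow> bool" where
  "lie_algebra sc br \<longleftrightarrow> vector_space sc
     \<and> (\<forall>x y z. br (x + y) z = br x z + br y z)
     \<and> (\<forall>x y z. br x (y + z) = br x y + br x z)
     \<and> (\<forall>c x y. br (sc c x) y = sc c (br x y))
     \<and> (\<forall>c x y. br x (sc c y) = sc c (br x y))
     \<and> (\<forall>x. br x x = 0)
     \<and> (\<forall>x y z. br (br x y) z + br (br y z) x + br (br z x) y = 0)"

definition lie_subalgebra :: "('k::field \<Rightarrow> 'b::ab_group_add \<Rightarrow> 'b) \<Rightarrow> ('b \<Rightarrow> 'b \<Rightarrow> 'b) \<Rightarrow> 'b set \<Rightarrow> bool" where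
  "lie_subalgebra sc br A \<longleftrightarrow> module.subspace sc A \<and> (\<forall>x\<in>A. \<forall>y\<in>A. br x y \<in> A)"

definition metabelian_on :: "('b \<Rightarrow> 'b \<Rightarrow> 'b::zero) \<Rightarrow> 'b set \<Rightarrow> bool" where
  "metabelian_on br A \<longleftrightarrow> (\<forall>x1\<in>A. \<forall>x2\<in>A. \<forall>x3\<in>A. \<forall>x4\<in>A. br (br x1 x2) (br x3 x4) = 0)"

definition lie_ideal :: "('k::field \<Rightarrow> 'b::ab_group_add \<Rightarrow> 'b) \<Rightarrow> ('b \<Rightarrow> 'b \<Rightarrow> 'b) \<Rightarrow> 'b set \<Rightarrow> 'b set \<Rightarrow> bool" where
  "lie_ideal sc br L I \<longleftrightarrow> module.subspace sc I \<and> I \<subseteq> L \<and> (\<forall>x\<in>L. \<forall>y\<in>I. br x y \<in> I)"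

text \<open>Lower central series of a Lie algebra with carrier I:
  I^1 = I, I^(m+1) = span of products x y with x in I^m, y in I (indexed from 0 here).\<close>
fun lower_central :: "('k::field \<Rightarrow> 'b::ab_group_add \<Rightarrow> 'b) \<Rightarrow> ('b \<Rightarrow> 'b \<Rightarrow> 'b) \<Rightarrow> 'b set \<Rightarrow> nat \<Rightarrow> 'b set" where
  "lower_central sc br I 0 = I"
| "lower_central sc br I (Suc m) = module.span sc {br x y | x y. x \<in> lower_central sc br I m \<and> y \<in> I}"

definition lie_nilpotent :: "('k::field \<Rightarrow> 'b::ab_group_add \<Rightarrow> 'b) \<Rightarrow> ('b \<Rightarrow> 'b \<Rightarrow> 'b) \<Rightarrow> 'b set \<Rightarrow> bool" where
  "lie_nilpotent sc br I \<longleftrightarrow> (\<exists>m. lower_central sc br I m = {0})"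

definition fitting_radical :: "('k::field \<Rightarrow> 'b::ab_group_add \<Rightarrow> 'b) \<Rightarrow> ('b \<Rightarrow> 'b \<Rightarrow> 'b) \<Rightarrow> 'b set \<Rightarrow> 'b set" where
  "fitting_radical sc br L = module.span sc (\<Union>{I. lie_ideal sc br L I \<and> lie_nilpotent sc br I})"

definition lin_indep_mod :: "('k::field \<Rightarrow> 'b::ab_group_add \<Rightarrow> 'b) \<Rightarrow> nat \<Rightarrow> (nat \<Rightarrow> 'b) \<Rightarrow> 'b set \<Rightarrow> bool" where
  "lin_indep_mod sc n c W \<longleftrightarrow>
     (\<forall>l::nat \<Rightarrow> 'k. (\<Sum>i<n. sc (l i) (c i)) \<in> W \<longrightarrow> (\<forall>i<n. l i = 0))"

definition fun_scale :: "'k::field \<Rightarrow> (nat \<Rightarrow> 'k) \<Rightarrow> (nat \<Rightarrow> 'k)" where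
  "fun_scale c f = (\<lambda>n. c * f n)"

text \<open>Test algebras are metabelian Lie brackets on the vector space nat \<Rightarrow> 'k; every
  finitely generated (hence countable-dimensional) metabelian Lie algebra over 'k embeds into
  such a one, so this is equivalent to the usual universal property.\<close>
definition free_metabelian_on :: "('k::field \<Rightarrow> 'b::ab_group_add \<Rightarrow> 'b) \<Rightarrow> ('b \<Rightarrow> 'b \<Rightarrow> 'b) \<Rightarrow> nat \<Rightarrow> (nat \<Rightarrow> 'b) \<Rightarrow> 'b set \<Rightarrow> bool" where
  "free_metabelian_on sc br r a A \<longleftrightarrow>
     lie_subalgebra sc br A \<and> metabelian_on br A \<and> (\<forall>i<r. a i \<in> A)
     \<and> A = \<Inter>{S. lie_subalgebra sc br S \<and> a ` {..<r} \<subseteq> S}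
     \<and> (\<forall>(br' :: (nat \<Rightarrow> 'k) \<Rightarrow> (nat \<Rightarrow> 'k) \<Rightarrow> (nat \<Rightarrow> 'k)) (m :: nat \<Rightarrow> (nat \<Rightarrow> 'k)).
          lie_algebra fun_scale br' \<and> metabelian_on br' UNIV \<longrightarrow>
          (\<exists>h. (\<forall>x\<in>A. \<forall>y\<in>A. h (x + y) = h x + h y \<and> h (br x y) = br' (h x) (h y))
             \<and> (\<forall>c. \<forall>x\<in>A. h (sc c x) = fun_scale c (h x))
             \<and> (\<forall>i<r. h (a i) = m i)))"

end

theory Submission
  imports Defs
begin

lemma lie_basic:
  assumes L: "lie_algebra sc br"
  shows "br 0 y = 0" "br x 0 = 0" "br x y = - br y x" "module sc"
proof -
  have ad1: "\<And>x y z. br (x + y) z = br x z + br y z" and ad2: "\<And>x y z. br x (y + z) = br x y + br x z"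
    and alt: "\<And>x. br x x = 0"
    using L unfolding lie_algebra_def by auto
  have "br (0+0) y = br 0 y + br 0 y" by (rule ad1)
  then show "br 0 y = 0" by simp
  have "br x (0+0) = br x 0 + br x 0" by (rule ad2)
  then show "br x 0 = 0" by simp
  have "0 = br (x+y) (x+y)" by (simp add: alt)
  also have "\<dots> = br x x + br x y + (br y x + br y y)" by (simp add: ad1 ad2)
  finally show "br x y = - br y x" by (simp add: alt eq_neg_iff_add_eq_0)
  show "module sc" using L unfolding lie_algebra_def module_iff_vector_space by auto
qed

lemma nil_ideal_central:
  assumes L: "lie_algebra sc br"
    and Phi1: "\<forall>x1 x2 x3 x4. br (br x1 x2) (br x3 x4) = 0"
    and Phi3: "\<forall>x y z. x \<noteq> 0 \<and> br x y = 0 \<and> br x z = 0 \<longrightarrow> br y z = 0"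
    and I: "lie_ideal sc br UNIV I" and N: "lie_nilpotent sc br I" and x: "x \<in> I"
  shows "br x (br p q) = 0"
proof (cases "\<exists>y. br y x \<noteq> 0")
  case False
  then show ?thesis using lie_basic(3)[OF L, of x "br p q"] by simp
next
  case True
  then obtain y where y: "br y x \<noteq> 0" by blast
  interpret module sc using lie_basic(4)[OF L] .
  define g where "g = rec_nat (br y x) (\<lambda>k v. br v x)"
  have g0: "g 0 = br y x" and gS: "\<And>k. g (Suc k) = br (g k) x" by (simp_all add: g_def)
  have gl: "g k \<in> lower_central sc br I k" for k
  proof (induction k)
    case 0 then show ?case using I x unfolding lie_ideal_def by (simp add: g0)
  next
    case (Suc k)
    then show ?case using x by (auto simp: gS intro!: span_base)
  qed
  obtain m where m: "lower_central sc br I m = {0}" using N unfolding lie_nilpotent_def by blast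
  have gm: "g m = 0" using gl[of m] m by simp
  have "\<exists>k. g k \<noteq> 0 \<and> g (Suc k) = 0"
  proof (rule ccontr)
    assume "\<not> ?thesis"
    then have "g k \<noteq> 0" for k by (induction k) (use y g0 in auto)
    then show False using gm by blast
  qed
  then obtain k where k: "g k \<noteq> 0" "g (Suc k) = 0" by blast
  have "\<exists>s t. g k = br s t" by (cases k) (auto simp: g0 gS)
  then obtain s t where st: "g k = br s t" by blast
  have "br (g k) (br p q) = 0" using Phi1 st by simp
  moreover have "br (g k) x = 0" using k gS by simp
  ultimately show ?thesis using Phi3 k(1) by blast
qed


lemma fit_central:
  assumes L: "lie_algebra sc br"
    and Phi1: "\<forall>x1 x2 x3 x4. br (br x1 x2) (br x3 x4) = 0"
    and Phi3: "\<forall>x y z. x \<noteq> 0 \<and> br x y = 0 \<and> br x z = 0 \<longrightarrow> br y z = 0"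
    and u: "u \<in> fitting_radical sc br UNIV"
  shows "br u (br p q) = 0"
proof -
  interpret module sc using lie_basic(4)[OF L] .
  let ?C = "{x. \<forall>p q. br x (br p q) = 0}"
  have ad1: "\<And>x y z. br (x + y) z = br x z + br y z" and sc1: "\<And>c x y. br (sc c x) y = sc c (br x y)"
    using L unfolding lie_algebra_def by auto
  have "subspace ?C"
    by (rule subspaceI) (auto simp: lie_basic(1)[OF L] ad1 sc1)
  moreover have "\<Union>{I. lie_ideal sc br UNIV I \<and> lie_nilpotent sc br I} \<subseteq> ?C"
    using nil_ideal_central[OF L Phi1 Phi3] by blast
  ultimately have "fitting_radical sc br UNIV \<subseteq> ?C"
    unfolding fitting_radical_def by (rule span_minimal[rotated])
  then show ?thesis using u by blast
qed

definition tbr :: "(nat \<Rightarrow> 'k::field) \<Rightarrow> (nat \<Rightarrow> 'k) \<Rightarrow> (nat \<Rightarrow> 'k)" where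
  "tbr f g = (\<lambda>k. if k = 1 then f 0 * g 1 - f 1 * g 0 else 0)"

lemma tbr_lie: "lie_algebra fun_scale (tbr :: (nat \<Rightarrow> 'k::field) \<Rightarrow> _)"
  unfolding lie_algebra_def
proof (intro conjI allI)
  show "vector_space (fun_scale :: 'k \<Rightarrow> _)"
    by unfold_locales (auto simp: fun_scale_def fun_eq_iff algebra_simps)
qed (auto simp: tbr_def fun_scale_def fun_eq_iff algebra_simps)

lemma tbr_meta: "metabelian_on tbr UNIV"
  unfolding metabelian_on_def tbr_def by (auto simp: fun_eq_iff)


lemma derived_in_fit:
  assumes L: "lie_algebra sc br"
    and Phi1: "\<forall>x1 x2 x3 x4. br (br x1 x2) (br x3 x4) = 0"
    and S: "lie_subalgebra sc br A"
  shows "module.span sc {br x y | x y. x \<in> A \<and> y \<in> A} \<subseteq> fitting_radical sc br A"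
proof -
  interpret module sc using lie_basic(4)[OF L] .
  define D where "D = {br x y | x y. x \<in> A \<and> y \<in> A}"
  have ad1: "\<And>x y z. br (x + y) z = br x z + br y z" and ad2: "\<And>x y z. br x (y + z) = br x y + br x z"
    and sc1: "\<And>c x y. br (sc c x) y = sc c (br x y)" and sc2: "\<And>c x y. br x (sc c y) = sc c (br x y)"
    using L unfolding lie_algebra_def by auto
  have SA: "subspace A" and SA2: "\<And>x y. x \<in> A \<Longrightarrow> y \<in> A \<Longrightarrow> br x y \<in> A"
    using S unfolding lie_subalgebra_def by auto
  have DA: "span D \<subseteq> A" using SA SA2 by (intro span_minimal) (auto simp: D_def)
  have inner: "br d y = 0" if "d \<in> D" "y \<in> span D" for d y
    using that(2)
  proof (induction rule: span_induct_alt)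
    case base then show ?case by (simp add: lie_basic(2)[OF L])
  next
    case (step c x y)
    then show ?case using that(1) Phi1 by (auto simp: D_def ad2 sc2)
  qed
  have zero: "br x y = 0" if "x \<in> span D" "y \<in> span D" for x y
    using that(1)
  proof (induction rule: span_induct_alt)
    case base then show ?case by (simp add: lie_basic(1)[OF L])
  next
    case (step c x' y')
    then show ?case using inner[OF step(1) that(2)] by (simp add: ad1 sc1)
  qed
  have "lower_central sc br (span D) (Suc 0) = {0}"
  proof -
    have "{br x y |x y. x \<in> span D \<and> y \<in> span D} = {0}"
    proof
      show "{br x y |x y. x \<in> span D \<and> y \<in> span D} \<subseteq> {0}" using zero by auto
      show "{0} \<subseteq> {br x y |x y. x \<in> span D \<and> y \<in> span D}"
        using span_zero lie_basic(1)[OF L, of 0] by force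
    qed
    then show ?thesis by (simp add: span_singleton)
  qed
  then have nil: "lie_nilpotent sc br (span D)" unfolding lie_nilpotent_def by blast
  have id: "lie_ideal sc br A (span D)"
    unfolding lie_ideal_def using DA by (auto simp: D_def intro!: span_base)
  show ?thesis unfolding D_def[symmetric] fitting_radical_def
    using nil id by (intro subset_trans[OF _ span_superset]) blast
qed


theorem lemma3p5:
  fixes sc :: "'k::field \<Rightarrow> 'b::ab_group_add \<Rightarrow> 'b"
    and br :: "'b \<Rightarrow> 'b \<Rightarrow> 'b"
    and r n :: nat and a c :: "nat \<Rightarrow> 'b" and A :: "'b set"
  assumes "lie_algebra sc br"
    and "r \<ge> 2"
    and "free_metabelian_on sc br r a A"
    and Phi1: "\<forall>x1 x2 x3 x4. br (br x1 x2) (br x3 x4) = 0"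
    and Phi2: "\<forall>x y. br (br x y) x = 0 \<and> br (br x y) y = 0 \<longrightarrow> br x y = 0"
    and Phi3: "\<forall>x y z. x \<noteq> 0 \<and> br x y = 0 \<and> br x z = 0 \<longrightarrow> br y z = 0"
    and "n \<le> r"
    and "\<forall>i<n. c i \<in> A"
    and "lin_indep_mod sc n c (fitting_radical sc br A)"
  shows "lin_indep_mod sc n c (fitting_radical sc br UNIV)"
  unfolding lin_indep_mod_def
proof (rule allI, rule impI)
  note L = assms(1)
  interpret module sc using lie_basic(4)[OF L] .
  have ad1: "\<And>x y z. br (x + y) z = br x z + br y z" and ad2: "\<And>x y z. br x (y + z) = br x y + br x z"
    and sc1: "\<And>c x y. br (sc c x) y = sc c (br x y)" and sc2: "\<And>c x y. br x (sc c y) = sc c (br x y)"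
    using L unfolding lie_algebra_def by auto
  have LS: "lie_subalgebra sc br A" and aA: "\<And>i. i < r \<Longrightarrow> a i \<in> A"
    and Aeq: "A = \<Inter>{S. lie_subalgebra sc br S \<and> a ` {..<r} \<subseteq> S}"
    and univ: "\<And>(br' :: (nat \<Rightarrow> 'k) \<Rightarrow> (nat \<Rightarrow> 'k) \<Rightarrow> (nat \<Rightarrow> 'k)) (m :: nat \<Rightarrow> (nat \<Rightarrow> 'k)).
          lie_algebra fun_scale br' \<and> metabelian_on br' UNIV \<Longrightarrow>
          (\<exists>h. (\<forall>x\<in>A. \<forall>y\<in>A. h (x + y) = h x + h y \<and> h (br x y) = br' (h x) (h y))
             \<and> (\<forall>c. \<forall>x\<in>A. h (sc c x) = fun_scale c (h x))
             \<and> (\<forall>i<r. h (a i) = m i))"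
    using assms(3) unfolding free_metabelian_on_def by blast+
  have SA: "subspace A" and SA2: "\<And>x y. x \<in> A \<Longrightarrow> y \<in> A \<Longrightarrow> br x y \<in> A"
    using LS unfolding lie_subalgebra_def by auto
  define D where "D = {br x y | x y. x \<in> A \<and> y \<in> A}"
  define A' where "A' = span D"
  have A'fit: "A' \<subseteq> fitting_radical sc br A"
    unfolding A'_def D_def using derived_in_fit[OF L Phi1 LS] .
  have DA: "A' \<subseteq> A" unfolding A'_def using SA SA2 by (intro span_minimal) (auto simp: D_def)
  define S where "S = (\<lambda>\<mu>. \<Sum>i<r. sc (\<mu> i) (a i))"
  have SinA: "S \<mu> \<in> A" for \<mu> unfolding S_def
    by (rule subspace_sum[OF SA]) (auto intro: subspace_scale[OF SA] aA)
  define T where "T = {x. \<exists>\<mu>. \<exists>w\<in>A'. x = S \<mu> + w}"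
  have TA: "T \<subseteq> A" using SinA DA subspace_add[OF SA] by (auto simp: T_def)
  have subT: "subspace T"
  proof (rule subspaceI)
    show "0 \<in> T" unfolding T_def S_def A'_def
      by (rule CollectI, rule exI[of _ "\<lambda>_. 0"], rule bexI[of _ 0]) (auto simp: span_zero)
  next
    fix x y assume "x \<in> T" "y \<in> T"
    then obtain \<mu>1 w1 \<mu>2 w2 where "w1 \<in> A'" "w2 \<in> A'" "x = S \<mu>1 + w1" "y = S \<mu>2 + w2"
      unfolding T_def by blast
    moreover have "S \<mu>1 + S \<mu>2 = S (\<lambda>i. \<mu>1 i + \<mu>2 i)"
      unfolding S_def by (simp add: scale_left_distrib sum.distrib)
    ultimately show "x + y \<in> T" unfolding T_def A'_def
      by (intro CollectI exI[of _ "\<lambda>i. \<mu>1 i + \<mu>2 i"] bexI[of _ "w1 + w2"])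
         (auto simp: algebra_simps intro: span_add)
  next
    fix c x assume "x \<in> T"
    then obtain \<mu> w where "w \<in> A'" "x = S \<mu> + w" unfolding T_def by blast
    moreover have "sc c (S \<mu>) = S (\<lambda>i. c * \<mu> i)"
      unfolding S_def by (simp add: scale_sum_right)
    ultimately show "sc c x \<in> T" unfolding T_def A'_def
      by (intro CollectI exI[of _ "\<lambda>i. c * \<mu> i"] bexI[of _ "sc c w"])
         (auto simp: scale_right_distrib intro: span_scale)
  qed
  have S0: "S (\<lambda>_. 0) = 0" unfolding S_def by simp
  have ltT: "lie_subalgebra sc br T"
    unfolding lie_subalgebra_def
  proof (intro conjI subT ballI)
    fix x y assume "x \<in> T" "y \<in> T"
    then have "br x y \<in> A'" using TA unfolding A'_def D_def by (auto intro!: span_base)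
    then show "br x y \<in> T" unfolding T_def using S0 by force
  qed
  have aT: "a ` {..<r} \<subseteq> T"
  proof
    fix x assume "x \<in> a ` {..<r}"
    then obtain i where i: "i < r" "x = a i" by blast
    have "S (\<lambda>j. if j = i then 1 else 0) = a i"
    proof -
      have "S (\<lambda>j. if j = i then 1 else 0) = (\<Sum>j<r. if j = i then a j else 0)"
        unfolding S_def by (rule sum.cong) auto
      also have "\<dots> = a i" using i by simp
      finally show ?thesis .
    qed
    then show "x \<in> T" unfolding T_def A'_def using i span_zero
      by (intro CollectI exI[of _ "\<lambda>j. if j = i then 1 else 0"] bexI[of _ 0]) auto
  qed
  have AT: "A \<subseteq> T" using Aeq ltT aT by blast
  fix l assume uF: "(\<Sum>i<n. sc (l i) (c i)) \<in> fitting_radical sc br UNIV"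
  show "\<forall>i<n. l i = 0"
  proof (rule ccontr)
    assume nz: "\<not> (\<forall>i<n. l i = 0)"
    define u where "u = (\<Sum>i<n. sc (l i) (c i))"
    have uA: "u \<in> A" unfolding u_def
      by (rule subspace_sum[OF SA]) (use assms(8) in \<open>auto intro: subspace_scale[OF SA]\<close>)
    have uFA: "u \<notin> fitting_radical sc br A"
      using assms(9) nz unfolding lin_indep_mod_def u_def by blast
    obtain \<mu> w where w: "w \<in> A'" and uS: "u = S \<mu> + w" using uA AT unfolding T_def by blast
    have "\<exists>j<r. \<mu> j \<noteq> 0"
    proof (rule ccontr)
      assume "\<not> ?thesis"
      then have "S \<mu> = 0" unfolding S_def by simp
      then have "u \<in> A'" using uS w by simp
      then show False using uFA A'fit by blast
    qed
    then obtain j where j: "j < r" "\<mu> j \<noteq> 0" by blast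
    define j' where "j' = (if j = 0 then 1 else (0::nat))"
    have j': "j' < r" "j' \<noteq> j" using assms(2) by (auto simp: j'_def)
    define e0 :: "nat \<Rightarrow> 'k" where "e0 = (\<lambda>k. if k = 0 then 1 else 0)"
    define e1 :: "nat \<Rightarrow> 'k" where "e1 = (\<lambda>k. if k = 1 then 1 else 0)"
    define m where "m = (\<lambda>i. if i = j then e0 else if i = j' then e1 else 0)"
    obtain h where hadd: "\<And>x y. x \<in> A \<Longrightarrow> y \<in> A \<Longrightarrow> h (x + y) = h x + h y"
      and hbr: "\<And>x y. x \<in> A \<Longrightarrow> y \<in> A \<Longrightarrow> h (br x y) = tbr (h x) (h y)"
      and hsc: "\<And>c x. x \<in> A \<Longrightarrow> h (sc c x) = fun_scale c (h x)"
      and ha: "\<And>i. i < r \<Longrightarrow> h (a i) = m i"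
      using univ[of tbr m] tbr_lie tbr_meta by blast
    have 0: "0 \<in> A" using subspace_0[OF SA] .
    have h0: "h 0 = 0" using hadd[OF 0 0] by simp
    have hsum: "(\<Sum>i\<in>F. sc (\<mu> i) (a i)) \<in> A \<and> h (\<Sum>i\<in>F. sc (\<mu> i) (a i)) 0 = (\<Sum>i\<in>F. \<mu> i * m i 0)"
      if "finite F" "F \<subseteq> {..<r}" for F
      using that
    proof (induction F rule: finite_induct)
      case empty then show ?case using 0 h0 by simp
    next
      case (insert i F)
      have ai: "a i \<in> A" "sc (\<mu> i) (a i) \<in> A" using insert aA subspace_scale[OF SA] by auto
      then show ?case using insert hadd[OF ai(2), of "\<Sum>i\<in>F. sc (\<mu> i) (a i)"] hsc[OF ai(1)] ha[of i]
        subspace_add[OF SA]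
        by (auto simp: fun_scale_def)
    qed
    have hS: "h (S \<mu>) 0 = \<mu> j"
    proof -
      have "h (S \<mu>) 0 = (\<Sum>i<r. \<mu> i * m i 0)" using hsum[of "{..<r}"] unfolding S_def by simp
      also have "\<dots> = (\<Sum>i<r. if i = j then \<mu> i else 0)"
        by (rule sum.cong) (auto simp: m_def e0_def e1_def)
      also have "\<dots> = \<mu> j" using j by simp
      finally show ?thesis .
    qed
    have hw: "x \<in> A \<and> h x 0 = 0" if "x \<in> A'" for x
      using that unfolding A'_def
    proof (induction rule: span_induct_alt)
      case base then show ?case using 0 h0 by simp
    next
      case (step c d y)
      then obtain s t where st: "s \<in> A" "t \<in> A" "d = br s t" unfolding D_def by blast
      have dA: "d \<in> A" "sc c d \<in> A" using st SA2 subspace_scale[OF SA] by auto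
      then show ?case using step hadd[OF dA(2), of y] hsc[OF dA(1)] hbr[OF st(1,2)] st(3)
        subspace_add[OF SA]
        by (auto simp: fun_scale_def tbr_def)
    qed
    have hu: "h u 0 = \<mu> j" using uS hadd[OF SinA[of \<mu>], of w] hw[OF w] hS by simp
    have X: "br (a j) (a j') \<in> A" "h (br (a j) (a j')) = tbr e0 e1"
      using SA2 aA j j' hbr[OF aA aA] ha j j' by (auto simp: m_def)
    have "br u (br (a j) (a j')) = 0"
      using fit_central[OF L Phi1 Phi3] uF unfolding u_def by blast
    then have "h (br u (br (a j) (a j'))) 1 = 0" using h0 by simp
    moreover have "h (br u (br (a j) (a j'))) 1 = h u 0"
      using hbr[OF uA X(1)] X(2) by (simp add: tbr_def e0_def e1_def)
    ultimately show False using hu j by simp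
  qed
qed

end
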